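(* Let $d\ge1$ and $K\ge d+2$. Then for every $\mathbf W\in\mathrm{OB}(d,K)$ we have $\rho_{\text{one-vs-rest}}(\mathbf W)\le 1$, and equality holds only if $\mathbf 0\in\operatorname{conv}\{\mathbf w_1,\dots,\mathbf w_K\}$.
   Context: $\mathrm{OB}(d,K)$ is the set of real $d\times K$ matrices with unit-norm columns $\mathbf w_1,\dots,\mathbf w_K$. For a point $\mathbf v$ and finite set $\mathcal W$, $\operatorname{dist}(\mathbf v,\mathcal W)=\inf\{\|\mathbf v-\mathbf w\|_2:\mathbf w\in\operatorname{conv}(\mathcal W)\}$. $\rho_{\text{one-vs-rest}}(\mathbf W)=\min_{k}\operatorname{dist}(\mathbf w_k,\{\mathbf w_j\}_{j\ne k})$. *)

theory Defs
  imports "HOL-Analysis.Analysis"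
begin

definition dist_conv :: "'a::euclidean_space \<Rightarrow> 'a set \<Rightarrow> real" where
  "dist_conv v W = Inf ((\<lambda>x. norm (v - x)) ` (convex hull W))"

definition rho_ovr :: "nat \<Rightarrow> (nat \<Rightarrow> 'a::euclidean_space) \<Rightarrow> real" where
  "rho_ovr K w = Min ((\<lambda>k. dist_conv (w k) (w ` ({..<K} - {k}))) ` {..<K})"

end

theory Submission
  imports Defs
begin

lemma dist_conv_le:
  assumes "p \<in> convex hull W"
  shows "dist_conv v W \<le> norm (v - p)"
  unfolding dist_conv_def
  by (rule cInf_lower) (use assms in \<open>auto intro: bdd_belowI[where m=0]\<close>)

lemma halfspace_point:
  fixes p :: "'a::euclidean_space"
  assumes "p \<in> convex hull M" "\<forall>m\<in>M. 1 \<le> norm (m - p) \<and> norm m = 1"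
  shows "p = 0"
proof -
  have "\<forall>m\<in>M. inner m p \<le> inner p p / 2"
  proof
    fix m assume "m \<in> M"
    then have a: "1 \<le> norm (m - p)" "norm m = 1" using assms by auto
    have "1 \<le> (norm (m - p))^2" using a by (simp add: one_le_power)
    also have "\<dots> = inner m m - 2 * inner m p + inner p p"
      by (simp add: power2_norm_eq_inner inner_diff inner_commute)
    also have "inner m m = 1" using a by (simp flip: power2_norm_eq_inner)
    finally show "inner m p \<le> inner p p / 2" by simp
  qed
  then have "M \<subseteq> {x. inner x p \<le> inner p p / 2}" by auto
  then have "convex hull M \<subseteq> {x. inner x p \<le> inner p p / 2}"
  proof (rule hull_minimal)
    show "convex {x. inner x p \<le> inner p p / 2}"
      using convex_halfspace_le[of p "inner p p / 2"] by (simp add: inner_commute)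
  qed
  then have "inner p p \<le> inner p p / 2" using assms(1) by auto
  then have "inner p p \<le> 0" by simp
  then show ?thesis by (metis inner_eq_zero_iff inner_ge_zero order_antisym)
qed

theorem mainTheorem5:
  fixes w :: "nat \<Rightarrow> 'a::euclidean_space" and K :: nat
  assumes "K \<ge> DIM('a) + 2"
    and "\<forall>k<K. norm (w k) = 1"
  shows "rho_ovr K w \<le> 1 \<and> (rho_ovr K w = 1 \<longrightarrow> 0 \<in> convex hull (w ` {..<K}))"
proof -
  define D where "D k = dist_conv (w k) (w ` ({..<K} - {k}))" for k
  have rho: "rho_ovr K w = Min (D ` {..<K})" unfolding rho_ovr_def D_def by simp
  have K0: "K > 0" using assms(1) by simp
  have rle: "rho_ovr K w \<le> D k" if "k < K" for k
    unfolding rho using that by (intro Min_le) auto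
  show ?thesis
  proof (cases "inj_on w {..<K}")
    case False
    then obtain j k where jk: "j < K" "k < K" "j \<noteq> k" "w j = w k"
      unfolding inj_on_def by auto
    have "w k \<in> convex hull (w ` ({..<K} - {k}))"
      using jk by (intro hull_inc) (metis Diff_iff image_eqI lessThan_iff singletonD)
    then have "D k \<le> 0" unfolding D_def using dist_conv_le[of "w k" _ "w k"] by simp
    then have "rho_ovr K w \<le> 0" using rle[OF jk(2)] by simp
    then show ?thesis by simp
  next
    case True
    let ?S = "w ` {..<K}"
    have "card ?S = K" using True card_image by fastforce
    then have "affine_dependent ?S" using assms(1) by (intro affine_dependent_biggerset) auto
    then obtain M P where MP: "M \<subseteq> ?S" "P \<subseteq> ?S" "M \<inter> P = {}" "convex hull M \<inter> convex hull P \<noteq> {}"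
      by (rule Radon)
    then obtain p where p: "p \<in> convex hull M" "p \<in> convex hull P" by auto
    have "M \<noteq> {}" using p by auto
    then obtain k0 where k0: "k0 < K" "w k0 \<in> M" using MP(1) by auto
    have Psub: "P \<subseteq> w ` ({..<K} - {k})" if "w k \<in> M" "k < K" for k
    proof
      fix x assume "x \<in> P"
      then obtain j where "j < K" "x = w j" using MP(2) by auto
      then show "x \<in> w ` ({..<K} - {k})" using that MP(3) \<open>x \<in> P\<close> by auto
    qed
    have pin: "p \<in> convex hull (w ` ({..<K} - {k}))" if "w k \<in> M" "k < K" for k
      using hull_mono[OF Psub[OF that]] p(2) by auto
    have key: "p = 0" if all: "\<forall>k<K. 1 \<le> D k"
    proof (rule halfspace_point[OF p(1)])
      show "\<forall>m\<in>M. 1 \<le> norm (m - p) \<and> norm m = 1"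
      proof
        fix m assume "m \<in> M"
        then obtain k where k: "k < K" "m = w k" using MP(1) by auto
        have "D k \<le> norm (m - p)" unfolding D_def k(2)
          by (rule dist_conv_le) (use pin k \<open>m \<in> M\<close> in auto)
        then show "1 \<le> norm (m - p) \<and> norm m = 1" using all k assms(2) by force
      qed
    qed
    have le1: "rho_ovr K w \<le> 1"
    proof (cases "\<forall>k<K. 1 \<le> D k")
      case True
      then have "p = 0" by (rule key)
      then have "D k0 \<le> norm (w k0 - 0)" unfolding D_def
        using pin[OF k0(2) k0(1)] by (intro dist_conv_le) auto
      then show ?thesis using rle[OF k0(1)] assms(2) k0 by auto
    next
      case False
      then obtain k where "k < K" "D k < 1" by auto
      then show ?thesis using rle by force
    qed
    moreover have "0 \<in> convex hull ?S" if "rho_ovr K w = 1"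
    proof -
      have "\<forall>k<K. 1 \<le> D k" using rle that by force
      then have "p = 0" by (rule key)
      then show ?thesis using p(2) hull_mono[OF MP(2)] by auto
    qed
    ultimately show ?thesis by blast
  qed
qed

end
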